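(* A rooted labeled forest that avoids $132$ avoids $2314$ if and only if it is a $P_1$-forest.
   Context: Rooted labeled forests are unordered forests with a distinguished root in each component and distinct integer labels $L(v)$. The ancestors of $v$ are the vertices on the path from the root of its component to $v$ (including $v$). An instance of a pattern $\pi$ of length $k$ is a sequence $v_1,\dots,v_k$ with $v_i$ a strict ancestor of $v_{i+1}$ and labels in the same relative order as $\pi$; a forest avoids $\pi$ if it has no instance. A vertex $v$ is a top-down minimum (TDM) if $L(u)\ge L(v)$ for every ancestor $u$ of $v$; other vertices are non-TDM. A non-TDM vertex $v$ is special if the path from the root to $v$ contains vertices $v_1,v_2,v_3,v_4$ in that order (not necessarily consecutive) with $v_1,v_3$ TDM and $v_2,v_4$ non-TDM. The ceiling of a special vertex $v$ is its lowest ancestor $u$ such that the path from $u$ to $v$ contains vertices $v_1,v_2,v_3,v_4$ in that order with $v_1,v_3$ TDM and $v_2,v_4$ non-TDM. A $P_1$-forest is a forest in which every special vertex $v$ with ceiling $u$ satisfies $L(u)>L(v)$. *)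

theory Defs
  imports Main
begin

text \<open>A rooted labeled forest: a finite vertex set V, a parent map p
  (p v = None iff v is a root), acyclic; labels L :: 'a => int injective on V.\<close>

definition par_rel :: "'a set \<Rightarrow> ('a \<Rightarrow> 'a option) \<Rightarrow> ('a \<times> 'a) set" where
  "par_rel V p = {(v, u). v \<in> V \<and> p v = Some u}"

definition rooted_forest :: "'a set \<Rightarrow> ('a \<Rightarrow> 'a option) \<Rightarrow> bool" where
  "rooted_forest V p \<longleftrightarrow> finite V \<and> (\<forall>v\<in>V. \<forall>u. p v = Some u \<longrightarrow> u \<in> V)
      \<and> acyclic (par_rel V p)"

definition anc :: "'a set \<Rightarrow> ('a \<Rightarrow> 'a option) \<Rightarrow> 'a \<Rightarrow> 'a \<Rightarrow> bool" where
  "anc V p u v \<longleftrightarrow> v \<in> V \<and> (v, u) \<in> (par_rel V p)\<^sup>*"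

definition sanc :: "'a set \<Rightarrow> ('a \<Rightarrow> 'a option) \<Rightarrow> 'a \<Rightarrow> 'a \<Rightarrow> bool" where
  "sanc V p u v \<longleftrightarrow> v \<in> V \<and> (v, u) \<in> (par_rel V p)\<^sup>+"

text \<open>Patterns are lists of naturals (permutations, e.g. [1,3,2] for 132).\<close>
definition contains_pat :: "'a set \<Rightarrow> ('a \<Rightarrow> 'a option) \<Rightarrow> ('a \<Rightarrow> int) \<Rightarrow> nat list \<Rightarrow> bool" where
  "contains_pat V p L \<pi> \<longleftrightarrow> (\<exists>vs. length vs = length \<pi> \<and> set vs \<subseteq> V
      \<and> (\<forall>i. Suc i < length vs \<longrightarrow> sanc V p (vs ! i) (vs ! Suc i))
      \<and> (\<forall>i<length vs. \<forall>j<length vs. L (vs ! i) < L (vs ! j) \<longleftrightarrow> \<pi> ! i < \<pi> ! j))"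

definition avoids_pat :: "'a set \<Rightarrow> ('a \<Rightarrow> 'a option) \<Rightarrow> ('a \<Rightarrow> int) \<Rightarrow> nat list \<Rightarrow> bool" where
  "avoids_pat V p L \<pi> \<longleftrightarrow> \<not> contains_pat V p L \<pi>"

definition TDM :: "'a set \<Rightarrow> ('a \<Rightarrow> 'a option) \<Rightarrow> ('a \<Rightarrow> int) \<Rightarrow> 'a \<Rightarrow> bool" where
  "TDM V p L v \<longleftrightarrow> v \<in> V \<and> (\<forall>u. anc V p u v \<longrightarrow> L v \<le> L u)"

definition tntn_between :: "'a set \<Rightarrow> ('a \<Rightarrow> 'a option) \<Rightarrow> ('a \<Rightarrow> int) \<Rightarrow> 'a \<Rightarrow> 'a \<Rightarrow> bool" where
  "tntn_between V p L u v \<longleftrightarrow> (\<exists>v1 v2 v3 v4.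
      anc V p u v1 \<and> anc V p v1 v2 \<and> anc V p v2 v3 \<and> anc V p v3 v4 \<and> anc V p v4 v
      \<and> TDM V p L v1 \<and> v2 \<in> V \<and> \<not> TDM V p L v2 \<and> TDM V p L v3 \<and> v4 \<in> V \<and> \<not> TDM V p L v4)"

definition special :: "'a set \<Rightarrow> ('a \<Rightarrow> 'a option) \<Rightarrow> ('a \<Rightarrow> int) \<Rightarrow> 'a \<Rightarrow> bool" where
  "special V p L v \<longleftrightarrow> v \<in> V \<and> \<not> TDM V p L v \<and> (\<exists>u. anc V p u v \<and> tntn_between V p L u v)"

definition ceiling_of :: "'a set \<Rightarrow> ('a \<Rightarrow> 'a option) \<Rightarrow> ('a \<Rightarrow> int) \<Rightarrow> 'a \<Rightarrow> 'a \<Rightarrow> bool" where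
  "ceiling_of V p L u v \<longleftrightarrow> anc V p u v \<and> tntn_between V p L u v
      \<and> (\<forall>w. anc V p w v \<and> tntn_between V p L w v \<longrightarrow> anc V p w u)"

definition P1_forest :: "'a set \<Rightarrow> ('a \<Rightarrow> 'a option) \<Rightarrow> ('a \<Rightarrow> int) \<Rightarrow> bool" where
  "P1_forest V p L \<longleftrightarrow> (\<forall>v u. special V p L v \<and> ceiling_of V p L u v \<longrightarrow> L u > L v)"

end

theory Submission
  imports Defs
begin

lemma par_fin: "rooted_forest V p \<Longrightarrow> finite (par_rel V p)"
proof -
  assume f: "rooted_forest V p"
  have "par_rel V p \<subseteq> V \<times> V" using f unfolding rooted_forest_def par_rel_def by auto
  moreover have "finite (V \<times> V)" using f unfolding rooted_forest_def by auto
  ultimately show ?thesis by (rule finite_subset)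
qed

lemma par_sv: "single_valued (par_rel V p)"
  unfolding single_valued_def par_rel_def by auto

lemma rt_in: assumes f: "rooted_forest V p" and "(v,u) \<in> (par_rel V p)\<^sup>*" and "v \<in> V"
  shows "u \<in> V"
  using assms(2,3)
proof (induction rule: rtrancl_induct)
  case base then show ?case by simp
next
  case (step y z)
  have "p y = Some z" using step(2) unfolding par_rel_def by simp
  moreover have "y \<in> V" using step.IH step.prems by blast
  ultimately show ?case using f unfolding rooted_forest_def by blast
qed

lemma anc_in: "rooted_forest V p \<Longrightarrow> anc V p u v \<Longrightarrow> u \<in> V \<and> v \<in> V"
  unfolding anc_def using rt_in by metis

lemma anc_refl: "v \<in> V \<Longrightarrow> anc V p v v" unfolding anc_def by auto

lemma anc_trans: "anc V p u w \<Longrightarrow> anc V p w v \<Longrightarrow> anc V p u v"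
  unfolding anc_def by auto

lemma sanc_anc: assumes f: "rooted_forest V p" shows "sanc V p u v \<longleftrightarrow> anc V p u v \<and> u \<noteq> v"
proof
  assume s: "sanc V p u v"
  have ac: "acyclic (par_rel V p)" using f unfolding rooted_forest_def by auto
  show "anc V p u v \<and> u \<noteq> v" using s ac unfolding sanc_def anc_def acyclic_def by auto
next
  assume "anc V p u v \<and> u \<noteq> v"
  then show "sanc V p u v" unfolding sanc_def anc_def by (auto simp: rtrancl_eq_or_trancl)
qed

lemma anc_antisym: assumes f: "rooted_forest V p" and "anc V p u v" "anc V p v u" shows "u = v"
proof (rule ccontr)
  assume ne: "u \<noteq> v"
  have ac: "acyclic (par_rel V p)" using f unfolding rooted_forest_def by auto
  have "(v,u) \<in> (par_rel V p)\<^sup>+" using assms(2) ne unfolding anc_def by (auto simp: rtrancl_eq_or_trancl)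
  moreover have "(u,v) \<in> (par_rel V p)\<^sup>*" using assms(3) unfolding anc_def by auto
  ultimately have "(v,v) \<in> (par_rel V p)\<^sup>+" by auto
  then show False using ac unfolding acyclic_def by auto
qed

lemma anc_chain: assumes f: "rooted_forest V p" and "anc V p x v" "anc V p y v"
  shows "anc V p x y \<or> anc V p y x"
proof -
  have "(x,y) \<in> (par_rel V p)\<^sup>* \<or> (y,x) \<in> (par_rel V p)\<^sup>*"
  proof -
    have "(v,x) \<in> (par_rel V p)\<^sup>*" "(v,y) \<in> (par_rel V p)\<^sup>*" using assms(2,3) unfolding anc_def by simp_all
    then show ?thesis by (rule single_valued_confluent[OF par_sv])
  qed
  moreover have "x \<in> V" "y \<in> V" using anc_in[OF f] assms(2,3) by auto
  ultimately show ?thesis unfolding anc_def by auto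
qed

lemma argmin_anc: fixes L :: "'a \<Rightarrow> int" assumes f: "rooted_forest V p" and v: "v \<in> V"
  shows "\<exists>k. anc V p k v \<and> (\<forall>x. anc V p x v \<longrightarrow> L k \<le> L x)"
proof -
  let ?A = "{x. anc V p x v}"
  have sub: "?A \<subseteq> V" using anc_in[OF f] by blast
  have fin: "finite ?A" using f sub finite_subset unfolding rooted_forest_def by blast
  have ne: "?A \<noteq> {}" using anc_refl[OF v] by auto
  have "Min (L ` ?A) \<in> L ` ?A" using fin ne by simp
  then obtain k where k: "k \<in> ?A" "L k = Min (L ` ?A)" by auto
  have "\<forall>x\<in>?A. L k \<le> L x" using k fin by simp
  then show ?thesis using k by auto
qed

lemma argmin_TDM: assumes f: "rooted_forest V p" and k: "anc V p k v" "\<forall>x. anc V p x v \<longrightarrow> L k \<le> L x"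
  shows "TDM V p L k"
proof -
  have "L k \<le> L u" if "anc V p u k" for u
  proof -
    have "anc V p u v" using anc_trans[OF that k(1)] .
    then show ?thesis using k(2) by blast
  qed
  then show ?thesis unfolding TDM_def using anc_in[OF f k(1)] by blast
qed

lemma mk132: assumes "x \<in> V" "y \<in> V" "z \<in> V" "sanc V p x y" "sanc V p y z" "L x < L z" "L z < L y"
  shows "contains_pat V p L [1,3,2]"
  unfolding contains_pat_def
proof (intro exI[of _ "[x,y,z]"] conjI allI impI)
  fix i assume "Suc i < length [x,y,z]"
  then have "i = 0 \<or> i = 1" by auto
  then show "sanc V p ([x,y,z] ! i) ([x,y,z] ! Suc i)" using assms by auto
next
  fix i j assume "i < length [x,y,z]" "j < length [x,y,z]"
  then have "i \<in> {0,1,2}" "j \<in> {0,1,2}" by auto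
  then show "(L ([x,y,z] ! i) < L ([x,y,z] ! j)) = ([1::nat,3,2] ! i < [1,3,2] ! j)"
    using assms by auto
qed (use assms in auto)

lemma mk2314: assumes "a \<in> V" "b \<in> V" "c \<in> V" "d \<in> V" "sanc V p a b" "sanc V p b c" "sanc V p c d"
   "L c < L a" "L a < L b" "L b < L d"
  shows "contains_pat V p L [2,3,1,4]"
  unfolding contains_pat_def
proof (intro exI[of _ "[a,b,c,d]"] conjI allI impI)
  fix i assume "Suc i < length [a,b,c,d]"
  then have "i = 0 \<or> i = 1 \<or> i = 2" by auto
  then show "sanc V p ([a,b,c,d] ! i) ([a,b,c,d] ! Suc i)" using assms by auto
next
  fix i j assume "i < length [a,b,c,d]" "j < length [a,b,c,d]"
  then have "i \<in> {0,1,2,3}" "j \<in> {0,1,2,3}" by auto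
  then show "(L ([a,b,c,d] ! i) < L ([a,b,c,d] ! j)) = ([2::nat,3,1,4] ! i < [2,3,1,4] ! j)"
    using assms by auto
qed (use assms in auto)

lemma get2314: assumes "contains_pat V p L [2,3,1,4]"
  shows "\<exists>a b c d. a \<in> V \<and> b \<in> V \<and> c \<in> V \<and> d \<in> V \<and> sanc V p a b \<and> sanc V p b c \<and> sanc V p c d
   \<and> L c < L a \<and> L a < L b \<and> L b < L d"
proof -
  obtain vs where vs0: "length vs = length [2::nat,3,1,4]" "set vs \<subseteq> V"
    "\<forall>i. Suc i < length vs \<longrightarrow> sanc V p (vs ! i) (vs ! Suc i)"
    "\<forall>i<length vs. \<forall>j<length vs. L (vs ! i) < L (vs ! j) \<longleftrightarrow> [2::nat,3,1,4] ! i < [2,3,1,4] ! j"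
    using assms unfolding contains_pat_def by blast
  have vs: "length vs = 4" "set vs \<subseteq> V"
    "\<forall>i. Suc i < length vs \<longrightarrow> sanc V p (vs ! i) (vs ! Suc i)"
    "\<forall>i<length vs. \<forall>j<length vs. L (vs ! i) < L (vs ! j) \<longleftrightarrow> [2::nat,3,1,4] ! i < [2,3,1,4] ! j"
    using vs0 by simp_all
  have h: "\<And>i. i < 3 \<Longrightarrow> sanc V p (vs ! i) (vs ! Suc i)" using vs(3) vs(1) by auto
  have s: "sanc V p (vs!0) (vs!1)" "sanc V p (vs!1) (vs!2)" "sanc V p (vs!2) (vs!3)"
    using h[of 0] h[of 1] h[of 2] by (simp_all add: numeral_2_eq_2 numeral_3_eq_3)
  have l: "L (vs!2) < L (vs!0)" "L (vs!0) < L (vs!1)" "L (vs!1) < L (vs!3)"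
    using vs(4) vs(1) by auto
  have iv: "vs!i \<in> V" if "i < 4" for i using vs(1,2) that nth_mem by (metis subsetD)
  have inV: "vs!0 \<in> V" "vs!1 \<in> V" "vs!2 \<in> V" "vs!3 \<in> V" using iv by simp_all
  show ?thesis using s l inV by blast
qed



lemma TDM_lt: assumes f: "rooted_forest V p" and inj: "inj_on L V" and t: "TDM V p L v"
  and a: "anc V p u v" and ne: "u \<noteq> v" shows "L v < L u"
proof -
  have "L v \<le> L u" using t a unfolding TDM_def by auto
  moreover have "L v \<noteq> L u" using inj anc_in[OF f a] ne unfolding inj_on_def by metis
  ultimately show ?thesis by auto
qed

lemma sanc_trans1: "rooted_forest V p \<Longrightarrow> sanc V p u w \<Longrightarrow> anc V p w v \<Longrightarrow> sanc V p u v"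
  unfolding sanc_def anc_def by (meson rtrancl_trancl_trancl)

lemma sanc_trans2: "rooted_forest V p \<Longrightarrow> anc V p u w \<Longrightarrow> sanc V p w v \<Longrightarrow> sanc V p u v"
  unfolding sanc_def anc_def by (meson trancl_rtrancl_trancl)

lemma ceiling_exists: assumes f: "rooted_forest V p" and u0: "anc V p u0 d" "tntn_between V p L u0 d"
  shows "\<exists>u. ceiling_of V p L u d"
proof -
  let ?S = "{u. anc V p u d \<and> tntn_between V p L u d}"
  have wf: "wf ((par_rel V p)\<^sup>+)"
    using f par_fin[OF f] finite_acyclic_wf wf_trancl unfolding rooted_forest_def by blast
  obtain z where z: "z \<in> ?S" "\<forall>y. (y, z) \<in> (par_rel V p)\<^sup>+ \<longrightarrow> y \<notin> ?S"
    using wf_eq_minimal[THEN iffD1, OF wf, rule_format, of u0 ?S] u0 by blast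
  have "\<forall>w. anc V p w d \<and> tntn_between V p L w d \<longrightarrow> anc V p w z"
  proof (intro allI impI)
    fix w assume w: "anc V p w d \<and> tntn_between V p L w d"
    have "anc V p w z \<or> anc V p z w" using anc_chain[OF f] w z(1) by blast
    moreover have "\<not> (anc V p z w \<and> z \<noteq> w)"
    proof
      assume "anc V p z w \<and> z \<noteq> w"
      then have "(w, z) \<in> (par_rel V p)\<^sup>+" using sanc_anc[OF f] unfolding sanc_def by blast
      then show False using z(2) w by blast
    qed
    ultimately show "anc V p w z" using anc_refl anc_in[OF f] w by metis
  qed
  then show ?thesis using z(1) unfolding ceiling_of_def by blast
qed

lemma ceiling_TDM: assumes f: "rooted_forest V p" and c: "ceiling_of V p L u d"
  shows "TDM V p L u"
proof -
  obtain v1 v2 v3 v4 where w: "anc V p u v1" "anc V p v1 v2" "anc V p v2 v3" "anc V p v3 v4" "anc V p v4 d"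
      "TDM V p L v1" "v2 \<in> V" "\<not> TDM V p L v2" "TDM V p L v3" "v4 \<in> V" "\<not> TDM V p L v4"
    using c unfolding ceiling_of_def tntn_between_def by blast
  have v1V: "v1 \<in> V" using anc_in[OF f w(2)] by simp
  have r1: "anc V p v1 v1" using anc_refl[OF v1V] .
  have "tntn_between V p L v1 d" unfolding tntn_between_def
    apply (rule exI[of _ v1], rule exI[of _ v2], rule exI[of _ v3], rule exI[of _ v4])
    using r1 w(2-11) by simp
  moreover have "anc V p v1 d" using anc_trans[OF w(2) anc_trans[OF w(3) anc_trans[OF w(4) w(5)]]] .
  ultimately have "anc V p v1 u" using c unfolding ceiling_of_def by blast
  then have "u = v1" using anc_antisym[OF f] w(1) by blast
  then show ?thesis using w by simp
qed

lemma dirA: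
  fixes V :: "'a set" and p :: "'a \<Rightarrow> 'a option" and L :: "'a \<Rightarrow> int"
  assumes "rooted_forest V p" and "inj_on L V"
    and "avoids_pat V p L [1, 3, 2]"
  shows "avoids_pat V p L [2, 3, 1, 4] \<Longrightarrow> P1_forest V p L"
proof -
  note f = assms(1) and inj = assms(2)
  have n132: "\<not> contains_pat V p L [1,3,2]" using assms(3) unfolding avoids_pat_def by auto
  assume av: "avoids_pat V p L [2, 3, 1, 4]"
  show "P1_forest V p L" unfolding P1_forest_def
  proof (intro allI impI, rule ccontr)
    fix v u assume vu: "special V p L v \<and> ceiling_of V p L u v" and nlt: "\<not> L v < L u"
    obtain v1 v2 v3 v4 where w: "anc V p u v1" "anc V p v1 v2" "anc V p v2 v3" "anc V p v3 v4" "anc V p v4 v"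
      "TDM V p L v1" "v2 \<in> V" "\<not> TDM V p L v2" "TDM V p L v3" "v4 \<in> V" "\<not> TDM V p L v4"
      using vu unfolding ceiling_of_def tntn_between_def by blast
    obtain k where k: "anc V p k v2" "\<forall>x. anc V p x v2 \<longrightarrow> L k \<le> L x"
      using argmin_anc[OF f w(7)] by blast
    obtain u' where u': "anc V p u' v2" "L u' < L v2" using w(7,8) unfolding TDM_def by auto
    have lk2: "L k < L v2" using k u' by force
    have ne23: "v2 \<noteq> v3" using w by auto
    have ne34: "v3 \<noteq> v4" using w by auto
    have s23: "sanc V p v2 v3" using sanc_anc[OF f] w(3) ne23 by blast
    have s34: "sanc V p v3 v4" using sanc_anc[OF f] w(4) ne34 by blast
    have s3v: "sanc V p v3 v" using sanc_trans1[OF f s34 w(5)] .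
    have s2v: "sanc V p v2 v" using sanc_trans1[OF f s23] w(4,5) anc_trans by metis
    have nek2: "k \<noteq> v2" using lk2 by auto
    have sk2: "sanc V p k v2" using sanc_anc[OF f] k(1) nek2 by blast
    have skv: "sanc V p k v" using sanc_trans1[OF f sk2] s2v sanc_anc[OF f] by blast
    have sk3: "sanc V p k v3" using sanc_trans1[OF f sk2 w(3)] .
    have lk1: "L k \<le> L v1" using k w(2) by blast
    have l1u: "L v1 \<le> L u" using w(6,1) unfolding TDM_def by blast
    have inV: "k \<in> V" "v \<in> V" "v2 \<in> V" "v3 \<in> V" using anc_in[OF f] k(1) w by blast+
    have "k \<noteq> v" using skv sanc_anc[OF f] by blast
    then have lkv: "L k < L v" using lk1 l1u nlt inj inV unfolding inj_on_def by force
    have "v2 \<noteq> v" using s2v sanc_anc[OF f] by blast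
    then have l2v: "L v2 < L v"
      using mk132[OF inV(1,3,2) sk2 s2v lkv] n132 inj inV unfolding inj_on_def by force
    have l3k: "L v3 < L k" using TDM_lt[OF f inj w(9)] sk3 sanc_anc[OF f] by blast
    have "contains_pat V p L [2,3,1,4]"
      using mk2314[OF inV(1,3,4,2) sk2 s23 s3v l3k lk2 l2v] .
    then show False using av unfolding avoids_pat_def by blast
  qed
qed

lemma dirB:
  fixes V :: "'a set" and p :: "'a \<Rightarrow> 'a option" and L :: "'a \<Rightarrow> int"
  assumes "rooted_forest V p" and "inj_on L V"
    and "avoids_pat V p L [1, 3, 2]"
  shows "P1_forest V p L \<Longrightarrow> avoids_pat V p L [2, 3, 1, 4]"
proof -
  note f = assms(1) and inj = assms(2)
  have n132: "\<not> contains_pat V p L [1,3,2]" using assms(3) unfolding avoids_pat_def by auto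
  assume P1: "P1_forest V p L"
  show "avoids_pat V p L [2, 3, 1, 4]" unfolding avoids_pat_def
  proof
    assume "contains_pat V p L [2, 3, 1, 4]"
    then obtain a b c d where abcd: "a \<in> V" "b \<in> V" "c \<in> V" "d \<in> V" "sanc V p a b" "sanc V p b c"
      "sanc V p c d" "L c < L a" "L a < L b" "L b < L d" using get2314 by blast
    have aab: "anc V p a b" "anc V p b c" "anc V p c d" using abcd(5-7) sanc_anc[OF f] by blast+
    obtain m1 where m1: "anc V p m1 a" "\<forall>x. anc V p x a \<longrightarrow> L m1 \<le> L x"
      using argmin_anc[OF f abcd(1)] by blast
    obtain m3 where m3: "anc V p m3 c" "\<forall>x. anc V p x c \<longrightarrow> L m3 \<le> L x"
      using argmin_anc[OF f abcd(3)] by blast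
    have t1: "TDM V p L m1" using argmin_TDM[OF f m1] .
    have t3: "TDM V p L m3" using argmin_TDM[OF f m3] .
    have lm3: "L m3 \<le> L c" using m3(2) anc_refl[OF abcd(3)] by blast
    have lm1: "L m1 \<le> L a" using m1(2) anc_refl[OF abcd(1)] by blast
    have m3V: "m3 \<in> V" using anc_in[OF f m3(1)] by blast
    have "\<not> anc V p m3 b"
    proof
      assume h: "anc V p m3 b"
      have "m3 \<noteq> b" using lm3 abcd by auto
      then have s1: "sanc V p m3 b" using h sanc_anc[OF f] by blast
      have "m3 \<noteq> c" using sanc_trans1[OF f s1 aab(2)] sanc_anc[OF f] by blast
      then have "L m3 \<noteq> L c" using inj m3V abcd(3) unfolding inj_on_def by blast
      then have l1: "L m3 < L c" using lm3 by simp
      have l2: "L c < L b" using abcd(8,9) by simp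
      have "contains_pat V p L [1,3,2]" using mk132[OF m3V abcd(2,3) s1 abcd(6) l1 l2] .
      then show False using n132 by blast
    qed
    then have "anc V p b m3" using anc_chain[OF f m3(1) aab(2)] by blast
    moreover have "b \<noteq> m3" using \<open>\<not> anc V p m3 b\<close> anc_refl[OF abcd(2)] by blast
    ultimately have bm3: "anc V p b m3" by blast
    have ntb: "\<not> TDM V p L b"
    proof
      assume "TDM V p L b"
      then have "L b \<le> L a" using aab(1) unfolding TDM_def by blast
      then show False using abcd(9) by simp
    qed
    have ntd: "\<not> TDM V p L d"
    proof
      assume "TDM V p L d"
      then have "L d \<le> L c" using aab(3) unfolding TDM_def by blast
      then show False using abcd(8,9,10) by simp
    qed
    have m1b: "anc V p m1 b" using anc_trans[OF m1(1) aab(1)] .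
    have m3d: "anc V p m3 d" using anc_trans[OF m3(1) aab(3)] .
    have m1V: "m1 \<in> V" using anc_in[OF f m1(1)] by simp
    have tn: "tntn_between V p L m1 d" unfolding tntn_between_def
      apply (rule exI[of _ m1], rule exI[of _ b], rule exI[of _ m3], rule exI[of _ d])
      using anc_refl[OF m1V] m1b bm3 m3d anc_refl[OF abcd(4)] t1 t3 ntb ntd abcd(2,4)
      by simp
    have m1d: "anc V p m1 d" using anc_trans[OF m1b anc_trans[OF bm3 m3d]] .
    have sp: "special V p L d" unfolding special_def using abcd(4) ntd m1d tn by blast
    obtain u where u: "ceiling_of V p L u d" using ceiling_exists[OF f m1d tn] by blast
    have "anc V p m1 u" using u m1d tn unfolding ceiling_of_def by blast
    then have "L u \<le> L m1" using ceiling_TDM[OF f u] unfolding TDM_def by blast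
    then have "\<not> L u > L d" using lm1 abcd by auto
    then show False using P1 sp u unfolding P1_forest_def by blast
  qed
qed

theorem lemma3p10:
  fixes V :: "'a set" and p :: "'a \<Rightarrow> 'a option" and L :: "'a \<Rightarrow> int"
  assumes "rooted_forest V p" and "inj_on L V"
    and "avoids_pat V p L [1, 3, 2]"
  shows "avoids_pat V p L [2, 3, 1, 4] \<longleftrightarrow> P1_forest V p L"
  using dirA[OF assms] dirB[OF assms] by blast

end
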